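(* Let $g$ be a probability density on $(0,\infty)$, let $\mu_1 \sim g$, and define $p(\zeta) = P_g(\mu_1 \le \zeta)$ and $v(\zeta) = E_g(\zeta - \mu_1)^+$. Let $\lambda > 0$ and $n \ge 1$, and for $\zeta > 0$ define $$r_n(\zeta) = \frac{\lambda}{p(\zeta)} + n\, E_g(\mu_1 \mid \mu_1 \le \zeta).$$ Let $\zeta_n$ be such that $v(\zeta_n) = \frac{\lambda}{n}$. Then $$\inf_{\zeta>0} r_n(\zeta) = r_n(\zeta_n) = n\zeta_n.$$
   Context: $a^+ = \max(0,a)$. In the paper, $\lambda = \int_0^\infty E_\mu(X \mid X>0)\, g(\mu)\, d\mu$ is the mean of the first non-zero reward of a random arm, where $X \sim F_\mu$ is a non-negative reward with mean $\mu$; $r_n(\zeta)$ is the asymptotic regret of an idealized algorithm that rejects arms with mean above $\zeta$. *)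

theory Defs
  imports "HOL-Analysis.Analysis"
begin

definition is_density_pos :: "(real \<Rightarrow> real) \<Rightarrow> bool" where
  "is_density_pos g \<longleftrightarrow> (\<forall>x>0. 0 \<le> g x) \<and> set_integrable lborel {0<..} g
     \<and> (LBINT x:{0<..}. g x) = 1"

definition pfun :: "(real \<Rightarrow> real) \<Rightarrow> real \<Rightarrow> real" where
  "pfun g \<zeta> = (LBINT x:{0<..\<zeta>}. g x)"

definition vfun :: "(real \<Rightarrow> real) \<Rightarrow> real \<Rightarrow> real" where
  "vfun g \<zeta> = (LBINT x:{0<..}. max 0 (\<zeta> - x) * g x)"

text \<open>E_g(mu_1 | mu_1 <= zeta), meaningful when pfun g zeta > 0\<close>
definition condmean :: "(real \<Rightarrow> real) \<Rightarrow> real \<Rightarrow> real" where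
  "condmean g \<zeta> = (LBINT x:{0<..\<zeta>}. x * g x) / pfun g \<zeta>"

text \<open>r_n(zeta) = lam / p(zeta) + n E_g(mu_1 | mu_1 <= zeta), with value +infinity
  when p(zeta) = 0 (then lam/p(zeta) = +infinity).\<close>
definition rfun :: "(real \<Rightarrow> real) \<Rightarrow> real \<Rightarrow> nat \<Rightarrow> real \<Rightarrow> ereal" where
  "rfun g lam n \<zeta> = (if pfun g \<zeta> = 0 then \<infinity>
     else ereal (lam / pfun g \<zeta> + real n * condmean g \<zeta>))"

end

theory Submission
  imports Defs
begin

lemma bnd_int:
  fixes G h :: "real \<Rightarrow> real"
  assumes "integrable lborel G" "h \<in> borel_measurable borel"
    and "\<And>x. norm (h x * G x) \<le> norm (B * G x)"
  shows "integrable lborel (\<lambda>x. h x * G x)"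
proof (rule Bochner_Integration.integrable_bound[of _ "\<lambda>x. B * G x"])
  show "integrable lborel (\<lambda>x. B * G x)" using assms(1) by simp
  have "G \<in> borel_measurable lborel" using assms(1) by auto
  then show "(\<lambda>x. h x * G x) \<in> borel_measurable lborel" using assms(2) by measurable
  show "AE x in lborel. norm (h x * G x) \<le> norm (B * G x)" using assms(3) by simp
qed

theorem lemma1:
  fixes g :: "real \<Rightarrow> real" and lam :: real and n :: nat and \<zeta>n :: real
  assumes "is_density_pos g"
    and "lam > 0" and "n \<ge> 1"
    and "vfun g \<zeta>n = lam / real n"
  shows "(INF \<zeta>\<in>{0<..}. rfun g lam n \<zeta>) = rfun g lam n \<zeta>n
         \<and> rfun g lam n \<zeta>n = ereal (real n * \<zeta>n)"
proof -
  define G where "G x = indicator {0<..} x * g x" for x :: real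
  have Gnn: "G x \<ge> 0" for x using assms(1) unfolding is_density_pos_def G_def
    by (auto simp: indicator_def)
  have G0: "x \<le> 0 \<Longrightarrow> G x = 0" for x unfolding G_def by auto
  have Gi: "integrable lborel G" using assms(1) unfolding is_density_pos_def G_def set_integrable_def
    by simp
  define I where "I z = (\<integral>x. (x * indicator {..z} x) * G x \<partial>lborel)" for z
  have pI: "pfun g z = (\<integral>x. indicator {..z} x * G x \<partial>lborel)" for z
    unfolding pfun_def set_lebesgue_integral_def G_def
    by (rule Bochner_Integration.integral_cong) (auto simp: indicator_def)
  have vI: "vfun g z = (\<integral>x. max 0 (z - x) * G x \<partial>lborel)" for z
    unfolding vfun_def set_lebesgue_integral_def G_def
    by (rule Bochner_Integration.integral_cong) (auto simp: indicator_def)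
  have cI: "condmean g z = I z / pfun g z" for z
    unfolding condmean_def I_def set_lebesgue_integral_def G_def
    by (rule arg_cong[where f="\<lambda>a. a / _"], rule Bochner_Integration.integral_cong) (auto simp: indicator_def)
  have int1: "integrable lborel (\<lambda>x. indicator {..z} x * G x)" for z
    by (rule bnd_int[OF Gi, of _ 1]) (auto simp: indicator_def Gnn abs_mult)
  have int2: "integrable lborel (\<lambda>x. (x * indicator {..z} x) * G x)" for z
  proof (rule bnd_int[OF Gi, of _ "\<bar>z\<bar>"])
    show "(\<lambda>x. x * indicator {..z} x) \<in> borel_measurable borel" by measurable
    fix x show "norm (x * indicator {..z} x * G x) \<le> norm (\<bar>z\<bar> * G x)"
      using G0[of x] Gnn[of x] by (cases "x \<le> 0") (auto simp: indicator_def abs_mult intro!: mult_right_mono)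
  qed
  have int3: "integrable lborel (\<lambda>x. max 0 (z - x) * G x)" for z
  proof (rule bnd_int[OF Gi, of _ "\<bar>z\<bar>"])
    show "(\<lambda>x. max 0 (z - x)) \<in> borel_measurable borel" by measurable
    fix x show "norm (max 0 (z - x) * G x) \<le> norm (\<bar>z\<bar> * G x)"
      using G0[of x] Gnn[of x] by (cases "x \<le> 0") (auto simp: abs_mult intro!: mult_right_mono)
  qed
  have pnn: "pfun g z \<ge> 0" for z unfolding pI
    by (rule integral_nonneg_AE) (auto simp: Gnn)
  have Inn: "I z \<ge> 0" for z unfolding I_def
    proof (rule integral_nonneg_AE, rule AE_I2)
    fix x show "0 \<le> x * indicator {..z} x * G x"
      using Gnn[of x] G0[of x] by (cases "x \<le> 0") (auto simp: indicator_def)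
  qed
  have vid: "vfun g z = z * pfun g z - I z" for z
  proof -
    have "vfun g z = (\<integral>x. z * (indicator {..z} x * G x) - (x * indicator {..z} x) * G x \<partial>lborel)"
      unfolding vI by (rule Bochner_Integration.integral_cong) (auto simp: indicator_def algebra_simps)
    also have "\<dots> = z * pfun g z - I z"
      using int1 int2 by (simp add: pI I_def)
    finally show ?thesis .
  qed
  have conv: "vfun g a - vfun g b \<ge> (a - b) * pfun g b" for a b
  proof -
    have "(a - b) * pfun g b = (\<integral>x. (a - b) * indicator {..b} x * G x \<partial>lborel)"
      unfolding pI by (simp add: mult.assoc)
    also have "\<dots> \<le> (\<integral>x. max 0 (a - x) * G x - max 0 (b - x) * G x \<partial>lborel)"
    proof (rule integral_mono)
      show "integrable lborel (\<lambda>x. (a - b) * indicator {..b} x * G x)"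
        using int1[of b] by (simp add: mult.assoc)
      show "integrable lborel (\<lambda>x. max 0 (a - x) * G x - max 0 (b - x) * G x)"
        using int3 by auto
      fix x
      have "(a - b) * indicator {..b} x \<le> max 0 (a - x) - max 0 (b - x)"
        by (auto simp: indicator_def)
      then have "(a - b) * indicator {..b} x * G x \<le> (max 0 (a - x) - max 0 (b - x)) * G x"
        using Gnn[of x] by (rule mult_right_mono)
      then show "(a - b) * indicator {..b} x * G x \<le> max 0 (a - x) * G x - max 0 (b - x) * G x"
        by (simp add: algebra_simps)
    qed
    also have "\<dots> = vfun g a - vfun g b" using int3 by (simp add: vI)
    finally show ?thesis .
  qed
  have npos: "real n > 0" using assms(3) by simp
  have vpos: "vfun g \<zeta>n > 0" using assms(2,4) npos by simp
  have pz: "pfun g \<zeta>n > 0"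
  proof -
    have "\<zeta>n * pfun g \<zeta>n > 0" using vpos vid[of \<zeta>n] Inn[of \<zeta>n] by linarith
    then show ?thesis using pnn[of \<zeta>n] by (metis less_eq_real_def mult_zero_right)
  qed
  have zpos: "\<zeta>n > 0"
  proof -
    have "\<zeta>n * pfun g \<zeta>n > 0" using vpos vid[of \<zeta>n] Inn[of \<zeta>n] by linarith
    then show ?thesis using pz by (simp add: zero_less_mult_iff)
  qed
  have lamv: "lam = real n * (\<zeta>n * pfun g \<zeta>n - I \<zeta>n)"
    using assms(4) vid[of \<zeta>n] npos by (simp add: field_simps)
  have rz: "rfun g lam n \<zeta>n = ereal (real n * \<zeta>n)"
  proof -
    have "lam / pfun g \<zeta>n + real n * condmean g \<zeta>n = (lam + real n * I \<zeta>n) / pfun g \<zeta>n"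
      by (simp add: cI add_divide_distrib)
    also have "\<dots> = real n * \<zeta>n" using pz by (simp add: lamv field_simps)
    finally show ?thesis using pz by (simp add: rfun_def)
  qed
  have lb: "rfun g lam n z \<ge> ereal (real n * \<zeta>n)" for z
  proof (cases "pfun g z = 0")
    case True then show ?thesis by (simp add: rfun_def)
  next
    case False
    then have pp: "pfun g z > 0" using pnn[of z] by simp
    have "lam \<ge> real n * (\<zeta>n * pfun g z - I z)"
      using conv[of \<zeta>n z] vid[of z] assms(4) npos by (simp add: field_simps)
    then have "real n * \<zeta>n * pfun g z \<le> lam + real n * I z" by (simp add: algebra_simps)
    then have "real n * \<zeta>n \<le> (lam + real n * I z) / pfun g z" using pp
      by (simp add: pos_le_divide_eq)
    also have "\<dots> = lam / pfun g z + real n * condmean g z"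
      by (simp add: cI add_divide_distrib)
    finally show ?thesis using False by (simp add: rfun_def)
  qed
  have "(INF \<zeta>\<in>{0<..}. rfun g lam n \<zeta>) = rfun g lam n \<zeta>n"
  proof (rule antisym)
    show "(INF \<zeta>\<in>{0<..}. rfun g lam n \<zeta>) \<le> rfun g lam n \<zeta>n"
      by (rule INF_lower) (use zpos in simp)
    show "rfun g lam n \<zeta>n \<le> (INF \<zeta>\<in>{0<..}. rfun g lam n \<zeta>)"
      by (rule INF_greatest) (use lb rz in simp)
  qed
  with rz show ?thesis by simp
qed

end
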